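(* For CCS, let $L_{CCS}$ be the set of all labels of the transition system $C_I$. Then $L_{CCS}$-bisimilarity coincides with ordinary strong bisimilarity of CCS: $\sim^{L_{CCS}}=\sim^{CCS}$.
   Context: CCS processes are built from $\mathbf{0}$, prefixes $a.P$, $\bar a.P$, $\tau.P$, sums, parallel composition $|$ and restriction $(\nu a)$ (extended processes also allow process variables $X$); $\equiv$ is the standard structural congruence, $\rightsquigarrow$ the standard reduction semantics (closed under $\equiv$, restriction and parallel composition, generated by $(a.P+M)|(\bar a.Q+N)\rightsquigarrow P|Q$ and $\tau.P+M\rightsquigarrow P$), and $\sim^{CCS}$ is ordinary strong bisimilarity on the standard CCS LTS with labels $\tau,a,\bar a$. The LTS $C$: (Tau) $P\rightsquigarrow Q$ gives $P\xrightarrow{-}Q$; (Rcv) $P\equiv(\nu A)(a.Q+M|R)$ with $a\notin A$ gives $P\xrightarrow{-|\bar a.X_1}(\nu A)(Q|R|X_1)$; (Snd) $P\equiv(\nu A)(\bar a.Q+M|R)$ with $a\notin A$ gives $P\xrightarrow{-|a.X_1}(\nu A)(Q|R|X_1)$. $C_I$ instantiates the process variable: $P\xrightarrow{C[-]}_{C_I}Q$ iff $P\xrightarrow{C_\epsilon[-]}Q_\epsilon$ in $C$ and a capture-avoiding substitution $\sigma$ of a pure process for $X_1$ has $Q_\epsilon\sigma\equiv Q$ and $C_\epsilon[-]\sigma=C[-]$. For a set $L$ of labels, an $L$-bisimulation is a symmetric relation $\mathcal{R}$ on pure processes such that if $P\,\mathcal{R}\,Q$ and $P\xrightarrow{C[-]}_{C_I}P'$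 then: if $C[-]\in L$, $Q\xrightarrow{C[-]}_{C_I}Q'$ with $P'\,\mathcal{R}\,Q'$; otherwise $C[Q]\rightsquigarrow Q'$ with $P'\,\mathcal{R}\,Q'$. $\sim^L$ is the largest $L$-bisimulation. *)

theory Defs
  imports Main
begin

type_synonym name = nat

datatype pre = In name | Out name | Tau

datatype proc = Sum sm | Par proc proc | Res name proc | Var nat
and sm = Zero | Pref pre proc | Plus sm sm

abbreviation Nil :: proc where "Nil \<equiv> Sum Zero"

fun fn_pre :: "pre \<Rightarrow> name set" where
  "fn_pre (In a) = {a}" | "fn_pre (Out a) = {a}" | "fn_pre Tau = {}"

fun fn_proc :: "proc \<Rightarrow> name set" and fn_sm :: "sm \<Rightarrow> name set" where
  "fn_proc (Sum M) = fn_sm M"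
| "fn_proc (Par P Q) = fn_proc P \<union> fn_proc Q"
| "fn_proc (Res a P) = fn_proc P - {a}"
| "fn_proc (Var X) = {}"
| "fn_sm Zero = {}"
| "fn_sm (Pref \<alpha> P) = fn_pre \<alpha> \<union> fn_proc P"
| "fn_sm (Plus M N) = fn_sm M \<union> fn_sm N"

fun bn_proc :: "proc \<Rightarrow> name set" and bn_sm :: "sm \<Rightarrow> name set" where
  "bn_proc (Sum M) = bn_sm M"
| "bn_proc (Par P Q) = bn_proc P \<union> bn_proc Q"
| "bn_proc (Res a P) = insert a (bn_proc P)"
| "bn_proc (Var X) = {}"
| "bn_sm Zero = {}"
| "bn_sm (Pref \<alpha> P) = bn_proc P"
| "bn_sm (Plus M N) = bn_sm M \<union> bn_sm N"

fun pure_proc :: "proc \<Rightarrow> bool" and pure_sm :: "sm \<Rightarrow> bool" where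
  "pure_proc (Sum M) = pure_sm M"
| "pure_proc (Par P Q) = (pure_proc P \<and> pure_proc Q)"
| "pure_proc (Res a P) = pure_proc P"
| "pure_proc (Var X) = False"
| "pure_sm Zero = True"
| "pure_sm (Pref \<alpha> P) = pure_proc P"
| "pure_sm (Plus M N) = (pure_sm M \<and> pure_sm N)"

definition swap_name :: "name \<Rightarrow> name \<Rightarrow> name \<Rightarrow> name" where
  "swap_name a b c = (if c = a then b else if c = b then a else c)"

fun swap_pre :: "name \<Rightarrow> name \<Rightarrow> pre \<Rightarrow> pre" where
  "swap_pre a b (In c) = In (swap_name a b c)"
| "swap_pre a b (Out c) = Out (swap_name a b c)"
| "swap_pre a b Tau = Tau"

fun swap_proc :: "name \<Rightarrow> name \<Rightarrow> proc \<Rightarrow> proc"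
and swap_sm :: "name \<Rightarrow> name \<Rightarrow> sm \<Rightarrow> sm" where
  "swap_proc a b (Sum M) = Sum (swap_sm a b M)"
| "swap_proc a b (Par P Q) = Par (swap_proc a b P) (swap_proc a b Q)"
| "swap_proc a b (Res c P) = Res (swap_name a b c) (swap_proc a b P)"
| "swap_proc a b (Var X) = Var X"
| "swap_sm a b Zero = Zero"
| "swap_sm a b (Pref \<alpha> P) = Pref (swap_pre a b \<alpha>) (swap_proc a b P)"
| "swap_sm a b (Plus M N) = Plus (swap_sm a b M) (swap_sm a b N)"

text \<open>Substitution of a process for a process variable (textual; capture
  avoidance is imposed separately by requiring that no bound name of the
  target is free in the substituted process).\<close>
fun subst_proc :: "nat \<Rightarrow> proc \<Rightarrow> proc \<Rightarrow> proc"
and subst_sm :: "nat \<Rightarrow> proc \<Rightarrow> sm \<Rightarrow> sm" where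
  "subst_proc X R (Sum M) = Sum (subst_sm X R M)"
| "subst_proc X R (Par P Q) = Par (subst_proc X R P) (subst_proc X R Q)"
| "subst_proc X R (Res c P) = Res c (subst_proc X R P)"
| "subst_proc X R (Var Y) = (if X = Y then R else Var Y)"
| "subst_sm X R Zero = Zero"
| "subst_sm X R (Pref \<alpha> P) = Pref \<alpha> (subst_proc X R P)"
| "subst_sm X R (Plus M N) = Plus (subst_sm X R M) (subst_sm X R N)"

definition capture_free :: "proc \<Rightarrow> proc \<Rightarrow> bool" where
  "capture_free R Q \<longleftrightarrow> bn_proc Q \<inter> fn_proc R = {}"

fun resL :: "name list \<Rightarrow> proc \<Rightarrow> proc" where
  "resL [] P = P"
| "resL (a # as) P = Res a (resL as P)"

inductive scong :: "proc \<Rightarrow> proc \<Rightarrow> bool"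
and scong_sm :: "sm \<Rightarrow> sm \<Rightarrow> bool" where
  sc_refl: "scong P P"
| sc_sym: "scong P Q \<Longrightarrow> scong Q P"
| sc_trans: "scong P Q \<Longrightarrow> scong Q R \<Longrightarrow> scong P R"
| sc_sum: "scong_sm M N \<Longrightarrow> scong (Sum M) (Sum N)"
| sc_par: "scong P P' \<Longrightarrow> scong Q Q' \<Longrightarrow> scong (Par P Q) (Par P' Q')"
| sc_res: "scong P Q \<Longrightarrow> scong (Res a P) (Res a Q)"
| sc_par_assoc: "scong (Par (Par P Q) R) (Par P (Par Q R))"
| sc_par_comm: "scong (Par P Q) (Par Q P)"
| sc_par_nil: "scong (Par P Nil) P"
| sc_res_nil: "scong (Res a Nil) Nil"
| sc_res_comm: "scong (Res a (Res b P)) (Res b (Res a P))"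
| sc_res_par: "a \<notin> fn_proc P \<Longrightarrow> scong (Par P (Res a Q)) (Res a (Par P Q))"
| sc_alpha: "b \<notin> fn_proc P \<Longrightarrow> scong (Res a P) (Res b (swap_proc a b P))"
| ss_refl: "scong_sm M M"
| ss_sym: "scong_sm M N \<Longrightarrow> scong_sm N M"
| ss_trans: "scong_sm M N \<Longrightarrow> scong_sm N K \<Longrightarrow> scong_sm M K"
| ss_pref: "scong P Q \<Longrightarrow> scong_sm (Pref \<alpha> P) (Pref \<alpha> Q)"
| ss_plus: "scong_sm M M' \<Longrightarrow> scong_sm N N' \<Longrightarrow> scong_sm (Plus M N) (Plus M' N')"
| ss_assoc: "scong_sm (Plus (Plus M N) K) (Plus M (Plus N K))"
| ss_comm: "scong_sm (Plus M N) (Plus N M)"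
| ss_zero: "scong_sm (Plus M Zero) M"

inductive red :: "proc \<Rightarrow> proc \<Rightarrow> bool" where
  red_com: "red (Par (Sum (Plus (Pref (In a) P) M)) (Sum (Plus (Pref (Out a) Q) N))) (Par P Q)"
| red_tau: "red (Sum (Plus (Pref Tau P) M)) P"
| red_par: "red P P' \<Longrightarrow> red (Par P Q) (Par P' Q)"
| red_res: "red P P' \<Longrightarrow> red (Res a P) (Res a P')"
| red_struct: "scong P P' \<Longrightarrow> red P' Q' \<Longrightarrow> scong Q' Q \<Longrightarrow> red P Q"

text \<open>Labels are contexts: the hole the hole or the context (hole | R).\<close>
datatype ctx = CHole | CPar proc

fun fill :: "ctx \<Rightarrow> proc \<Rightarrow> proc" where
  "fill CHole P = P"
| "fill (CPar R) P = Par P R"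

fun subst_ctx :: "nat \<Rightarrow> proc \<Rightarrow> ctx \<Rightarrow> ctx" where
  "subst_ctx X R CHole = CHole"
| "subst_ctx X R (CPar S) = CPar (subst_proc X R S)"

inductive ltsC :: "proc \<Rightarrow> ctx \<Rightarrow> proc \<Rightarrow> bool" where
  C_tau: "red P Q \<Longrightarrow> ltsC P CHole Q"
| C_rcv: "scong P (resL A (Par (Sum (Plus (Pref (In a) Q) M)) R)) \<Longrightarrow> a \<notin> set A \<Longrightarrow>
    ltsC P (CPar (Sum (Pref (Out a) (Var 1)))) (resL A (Par (Par Q R) (Var 1)))"
| C_snd: "scong P (resL A (Par (Sum (Plus (Pref (Out a) Q) M)) R)) \<Longrightarrow> a \<notin> set A \<Longrightarrow>
    ltsC P (CPar (Sum (Pref (In a) (Var 1)))) (resL A (Par (Par Q R) (Var 1)))"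

definition ltsCI :: "proc \<Rightarrow> ctx \<Rightarrow> proc \<Rightarrow> bool" where
  "ltsCI P C Q \<longleftrightarrow> pure_proc P \<and>
     (\<exists>Ce Qe S. ltsC P Ce Qe \<and> pure_proc S \<and> capture_free S Qe \<and>
        scong (subst_proc 1 S Qe) Q \<and> subst_ctx 1 S Ce = C)"

definition L_CCS :: "ctx set" where
  "L_CCS = {C. \<exists>P Q. ltsCI P C Q}"

definition L_bisim :: "ctx set \<Rightarrow> (proc \<Rightarrow> proc \<Rightarrow> bool) \<Rightarrow> bool" where
  "L_bisim L Rel \<longleftrightarrow>
     (\<forall>P Q. Rel P Q \<longrightarrow> pure_proc P \<and> pure_proc Q \<and> Rel Q P) \<and>
     (\<forall>P Q C P'. Rel P Q \<and> ltsCI P C P' \<longrightarrow>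
        (if C \<in> L then (\<exists>Q'. ltsCI Q C Q' \<and> Rel P' Q')
         else (\<exists>Q'. red (fill C Q) Q' \<and> Rel P' Q')))"

definition L_bisimilar :: "ctx set \<Rightarrow> proc \<Rightarrow> proc \<Rightarrow> bool" where
  "L_bisimilar L P Q \<longleftrightarrow> (\<exists>Rel. L_bisim L Rel \<and> Rel P Q)"

inductive ccs_trans :: "proc \<Rightarrow> pre \<Rightarrow> proc \<Rightarrow> bool" where
  t_pref: "ccs_trans (Sum (Pref \<alpha> P)) \<alpha> P"
| t_sumL: "ccs_trans (Sum M) \<alpha> P' \<Longrightarrow> ccs_trans (Sum (Plus M N)) \<alpha> P'"
| t_sumR: "ccs_trans (Sum N) \<alpha> P' \<Longrightarrow> ccs_trans (Sum (Plus M N)) \<alpha> P'"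
| t_parL: "ccs_trans P \<alpha> P' \<Longrightarrow> ccs_trans (Par P Q) \<alpha> (Par P' Q)"
| t_parR: "ccs_trans Q \<alpha> Q' \<Longrightarrow> ccs_trans (Par P Q) \<alpha> (Par P Q')"
| t_comL: "ccs_trans P (In a) P' \<Longrightarrow> ccs_trans Q (Out a) Q' \<Longrightarrow> ccs_trans (Par P Q) Tau (Par P' Q')"
| t_comR: "ccs_trans P (Out a) P' \<Longrightarrow> ccs_trans Q (In a) Q' \<Longrightarrow> ccs_trans (Par P Q) Tau (Par P' Q')"
| t_res: "ccs_trans P \<alpha> P' \<Longrightarrow> a \<notin> fn_pre \<alpha> \<Longrightarrow> ccs_trans (Res a P) \<alpha> (Res a P')"

definition ccs_bisim :: "(proc \<Rightarrow> proc \<Rightarrow> bool) \<Rightarrow> bool" where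
  "ccs_bisim Rel \<longleftrightarrow>
     (\<forall>P Q \<alpha> P'. Rel P Q \<and> ccs_trans P \<alpha> P' \<longrightarrow> (\<exists>Q'. ccs_trans Q \<alpha> Q' \<and> Rel P' Q')) \<and>
     (\<forall>P Q \<alpha> Q'. Rel P Q \<and> ccs_trans Q \<alpha> Q' \<longrightarrow> (\<exists>P'. ccs_trans P \<alpha> P' \<and> Rel P' Q'))"

definition ccs_bisimilar :: "proc \<Rightarrow> proc \<Rightarrow> bool" where
  "ccs_bisimilar P Q \<longleftrightarrow> (\<exists>Rel. ccs_bisim Rel \<and> Rel P Q)"

end

theory Submission
  imports Defs
begin



lemma swap_name_inv[simp]: "swap_name a b (swap_name a b c) = c"
  by (simp add: swap_name_def)

lemma swap_name_inj[simp]: "swap_name a b x = swap_name a b y \<longleftrightarrow> x = y"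
  by (metis swap_name_inv)

lemma swap_pre_inv[simp]: "swap_pre a b (swap_pre a b x) = x"
  by (cases x) auto

lemma swap_inv[simp]: "swap_proc a b (swap_proc a b P) = P" "swap_sm a b (swap_sm a b M) = M"
  by (induction P and M rule: proc.induct sm.induct) auto

lemma swap_pure[simp]: "pure_proc (swap_proc a b P) = pure_proc P" "pure_sm (swap_sm a b M) = pure_sm M"
  by (induction P and M rule: proc.induct sm.induct) auto

lemma fn_swap_pre[simp]: "fn_pre (swap_pre a b x) = swap_name a b ` fn_pre x"
  by (cases x) auto

lemma fn_swap: "fn_proc (swap_proc a b P) = swap_name a b ` fn_proc P"
   "fn_sm (swap_sm a b M) = swap_name a b ` fn_sm M"
  by (induction P and M rule: proc.induct sm.induct) (auto simp: image_Un image_set_diff)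


lemma trans_Zero[simp]: "\<not> ccs_trans (Sum Zero) \<alpha> P"
  by (auto elim: ccs_trans.cases)
lemma trans_Var[simp]: "\<not> ccs_trans (Var X) \<alpha> P"
  by (auto elim: ccs_trans.cases)
lemma trans_Pref[simp]: "ccs_trans (Sum (Pref \<alpha> P)) \<beta> P' \<longleftrightarrow> \<beta> = \<alpha> \<and> P' = P"
  by (auto elim: ccs_trans.cases intro: ccs_trans.intros)
lemma trans_Plus[simp]: "ccs_trans (Sum (Plus M N)) \<alpha> P' \<longleftrightarrow> ccs_trans (Sum M) \<alpha> P' \<or> ccs_trans (Sum N) \<alpha> P'"
  by (auto elim: ccs_trans.cases intro: ccs_trans.intros)
lemma trans_Res[simp]: "ccs_trans (Res a P) \<alpha> R \<longleftrightarrow> (\<exists>P'. ccs_trans P \<alpha> P' \<and> a \<notin> fn_pre \<alpha> \<and> R = Res a P')"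
  by (auto elim: ccs_trans.cases intro: ccs_trans.intros)
lemma trans_Par: "ccs_trans (Par P Q) \<alpha> R \<longleftrightarrow> (\<exists>P'. ccs_trans P \<alpha> P' \<and> R = Par P' Q) \<or> (\<exists>Q'. ccs_trans Q \<alpha> Q' \<and> R = Par P Q')
   \<or> (\<alpha> = Tau \<and> (\<exists>a P' Q'. ((ccs_trans P (In a) P' \<and> ccs_trans Q (Out a) Q') \<or> (ccs_trans P (Out a) P' \<and> ccs_trans Q (In a) Q')) \<and> R = Par P' Q'))"
  apply (rule iffI)
   apply (erule ccs_trans.cases; blast)
  by (auto intro: ccs_trans.intros)

lemma trans_fn: "ccs_trans P \<alpha> P' \<Longrightarrow> fn_pre \<alpha> \<subseteq> fn_proc P \<and> fn_proc P' \<subseteq> fn_proc P"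
  by (induction rule: ccs_trans.induct) auto

lemma trans_pure: "ccs_trans P \<alpha> P' \<Longrightarrow> pure_proc P \<Longrightarrow> pure_proc P'"
  by (induction rule: ccs_trans.induct) auto

lemma swap_pre_id: "a \<notin> fn_pre x \<Longrightarrow> b \<notin> fn_pre x \<Longrightarrow> swap_pre a b x = x"
  by (cases x) (auto simp: swap_name_def)

lemma trans_swap: "ccs_trans P \<alpha> P' \<Longrightarrow> ccs_trans (swap_proc a b P) (swap_pre a b \<alpha>) (swap_proc a b P')"
proof (induction rule: ccs_trans.induct)
  case (t_res P \<alpha> P' c)
  then show ?case by (auto intro!: ccs_trans.intros simp: image_iff)
qed (auto intro: ccs_trans.intros)

lemma scong_pure_fn:
  "scong P Q \<Longrightarrow> pure_proc P = pure_proc Q \<and> fn_proc P = fn_proc Q"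
  "scong_sm M N \<Longrightarrow> pure_sm M = pure_sm N \<and> fn_sm M = fn_sm N"
proof (induction rule: scong_scong_sm.inducts)
  case (sc_alpha b P a)
  then show ?case by (auto simp: fn_swap swap_name_def image_iff split: if_splits)
qed auto


definition sim :: "proc \<Rightarrow> proc \<Rightarrow> bool" where
  "sim P Q \<longleftrightarrow> (\<forall>\<alpha> P'. ccs_trans P \<alpha> P' \<longrightarrow> (\<exists>Q'. ccs_trans Q \<alpha> Q' \<and> scong P' Q'))"

lemma sim_trans: "sim P Q \<Longrightarrow> sim Q R \<Longrightarrow> sim P R"
  unfolding sim_def by (meson scong_scong_sm.sc_trans)

lemma simD: "sim P Q \<Longrightarrow> ccs_trans P \<alpha> P' \<Longrightarrow> \<exists>Q'. ccs_trans Q \<alpha> Q' \<and> scong P' Q'"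
  unfolding sim_def by blast

lemma simI: "(\<And>\<alpha> P'. ccs_trans P \<alpha> P' \<Longrightarrow> \<exists>Q'. ccs_trans Q \<alpha> Q' \<and> scong P' Q') \<Longrightarrow> sim P Q"
  unfolding sim_def by blast

lemma sim_par: "scong P P' \<Longrightarrow> scong Q Q' \<Longrightarrow> sim P P' \<Longrightarrow> sim Q Q' \<Longrightarrow> sim (Par P Q) (Par P' Q')"
proof (rule simI)
  fix \<alpha> R
  assume h: "scong P P'" "scong Q Q'" "sim P P'" "sim Q Q'" and "ccs_trans (Par P Q) \<alpha> R"
  then consider (L) P1 where "ccs_trans P \<alpha> P1" "R = Par P1 Q"
    | (R) Q1 where "ccs_trans Q \<alpha> Q1" "R = Par P Q1"
    | (C1) a P1 Q1 where "\<alpha> = Tau" "ccs_trans P (In a) P1" "ccs_trans Q (Out a) Q1" "R = Par P1 Q1"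
    | (C2) a P1 Q1 where "\<alpha> = Tau" "ccs_trans P (Out a) P1" "ccs_trans Q (In a) Q1" "R = Par P1 Q1"
    unfolding trans_Par by blast
  then show "\<exists>Q'a. ccs_trans (Par P' Q') \<alpha> Q'a \<and> scong R Q'a"
  proof cases
    case L
    then obtain P2 where "ccs_trans P' \<alpha> P2" "scong P1 P2" using h simD by blast
    then show ?thesis using L h by (auto intro!: exI[of _ "Par P2 Q'"] ccs_trans.intros scong_scong_sm.sc_par)
  next
    case R
    then obtain Q2 where "ccs_trans Q' \<alpha> Q2" "scong Q1 Q2" using h simD by blast
    then show ?thesis using R h by (auto intro!: exI[of _ "Par P' Q2"] ccs_trans.intros scong_scong_sm.sc_par)
  next
    case C1
    then obtain P2 Q2 where "ccs_trans P' (In a) P2" "scong P1 P2" "ccs_trans Q' (Out a) Q2" "scong Q1 Q2" using h simD by metis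
    then show ?thesis using C1 h by (auto intro!: exI[of _ "Par P2 Q2"] ccs_trans.t_comL scong_scong_sm.sc_par)
  next
    case C2
    then obtain P2 Q2 where "ccs_trans P' (Out a) P2" "scong P1 P2" "ccs_trans Q' (In a) Q2" "scong Q1 Q2" using h simD by metis
    then show ?thesis using C2 h by (auto intro!: exI[of _ "Par P2 Q2"] ccs_trans.t_comR scong_scong_sm.sc_par)
  qed
qed

lemma sim_comm: "sim (Par P Q) (Par Q P)"
  unfolding sim_def trans_Par by (blast intro: scong_scong_sm.sc_par_comm)

lemma sim_nil1: "sim (Par P Nil) P"
  unfolding sim_def trans_Par by (auto intro: scong_scong_sm.sc_par_nil)

lemma sim_nil2: "sim P (Par P Nil)"
  unfolding sim_def trans_Par by (blast intro: scong_scong_sm.sc_par_nil scong_scong_sm.sc_sym)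

lemma sim_res_comm: "sim (Res a (Res b P)) (Res b (Res a P))"
  unfolding sim_def by (auto intro: scong_scong_sm.sc_res_comm)

lemma trans_ParE:
  assumes "ccs_trans (Par P Q) \<alpha> R"
  obtains (L) P' where "ccs_trans P \<alpha> P'" "R = Par P' Q"
    | (R) Q' where "ccs_trans Q \<alpha> Q'" "R = Par P Q'"
    | (C1) a P' Q' where "\<alpha> = Tau" "ccs_trans P (In a) P'" "ccs_trans Q (Out a) Q'" "R = Par P' Q'"
    | (C2) a P' Q' where "\<alpha> = Tau" "ccs_trans P (Out a) P'" "ccs_trans Q (In a) Q'" "R = Par P' Q'"
  using assms unfolding trans_Par by blast

lemma sim_assoc1: "sim (Par (Par P Q) R) (Par P (Par Q R))"
  apply (rule simI)
  apply (erule trans_ParE; (erule trans_ParE)?; fastforce intro: ccs_trans.intros scong_scong_sm.sc_par_assoc)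
  done

lemma sim_assoc2: "sim (Par P (Par Q R)) (Par (Par P Q) R)"
  apply (rule simI)
  apply (erule trans_ParE; (erule trans_ParE)?; fastforce intro: ccs_trans.intros scong_scong_sm.sc_par_assoc scong_scong_sm.sc_sym)
  done

lemma nfn_pre: "ccs_trans P \<alpha> P' \<Longrightarrow> a \<notin> fn_proc P \<Longrightarrow> a \<notin> fn_pre \<alpha>"
  using trans_fn by blast
lemma nfn_der: "ccs_trans P \<alpha> P' \<Longrightarrow> a \<notin> fn_proc P \<Longrightarrow> a \<notin> fn_proc P'"
  using trans_fn by blast

lemma sim_res_par1: "a \<notin> fn_proc P \<Longrightarrow> sim (Par P (Res a Q)) (Res a (Par P Q))"
  apply (rule simI)
  apply (erule trans_ParE)
     apply (auto intro!: ccs_trans.intros scong_scong_sm.sc_res_par dest: nfn_pre nfn_der)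
  done

lemma sim_res_par2: "a \<notin> fn_proc P \<Longrightarrow> sim (Res a (Par P Q)) (Par P (Res a Q))"
  apply (rule simI)
  apply (simp only: trans_Res)
  apply (elim exE conjE)
  apply (erule trans_ParE)
     apply (auto intro!: ccs_trans.intros scong_scong_sm.sc_res_par[THEN scong_scong_sm.sc_sym] dest: nfn_pre nfn_der)[2]
  subgoal for \<alpha> R X c P' Q'
    apply (rule exI[of _ "Par P' (Res a Q')"])
    apply (frule nfn_pre, assumption)
    apply (frule nfn_der, assumption)
    apply (auto intro!: ccs_trans.t_comL ccs_trans.t_res scong_scong_sm.sc_res_par[THEN scong_scong_sm.sc_sym])
    done
  subgoal for \<alpha> R X c P' Q'
    apply (rule exI[of _ "Par P' (Res a Q')"])
    apply (frule nfn_pre, assumption)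
    apply (frule nfn_der, assumption)
    apply (auto intro!: ccs_trans.t_comR ccs_trans.t_res scong_scong_sm.sc_res_par[THEN scong_scong_sm.sc_sym])
    done
  done

lemma sim_plus: "sim (Sum M) (Sum M') \<Longrightarrow> sim (Sum N) (Sum N') \<Longrightarrow> sim (Sum (Plus M N)) (Sum (Plus M' N'))"
  unfolding sim_def trans_Plus by blast

lemma sim_pref: "scong P Q \<Longrightarrow> sim (Sum (Pref \<alpha> P)) (Sum (Pref \<alpha> Q))"
  unfolding sim_def by auto

lemma swap_name_notin: "b \<notin> A \<Longrightarrow> swap_name a b x \<in> swap_name a b ` A \<longleftrightarrow> x \<in> A"
  by (auto simp: image_iff)

lemma sim_alpha1: "b \<notin> fn_proc P \<Longrightarrow> sim (Res a P) (Res b (swap_proc a b P))"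
proof (rule simI)
  fix \<alpha> R assume b: "b \<notin> fn_proc P" and "ccs_trans (Res a P) \<alpha> R"
  then obtain P' where t: "ccs_trans P \<alpha> P'" "a \<notin> fn_pre \<alpha>" "R = Res a P'" by auto
  have "b \<notin> fn_pre \<alpha>" "b \<notin> fn_proc P'" using t b trans_fn by blast+
  then have "swap_pre a b \<alpha> = \<alpha>" using t swap_pre_id by blast
  then have "ccs_trans (swap_proc a b P) \<alpha> (swap_proc a b P')" using trans_swap[OF t(1), of a b] by simp
  moreover have "scong R (Res b (swap_proc a b P'))" using t \<open>b \<notin> fn_proc P'\<close> by (simp add: sc_alpha)
  ultimately show "\<exists>Q'. ccs_trans (Res b (swap_proc a b P)) \<alpha> Q' \<and> scong R Q'"
    using \<open>b \<notin> fn_pre \<alpha>\<close> by auto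
qed

lemma sim_alpha2: "b \<notin> fn_proc P \<Longrightarrow> sim (Res b (swap_proc a b P)) (Res a P)"
proof (rule simI)
  fix \<alpha> R assume b: "b \<notin> fn_proc P" and "ccs_trans (Res b (swap_proc a b P)) \<alpha> R"
  then obtain P' where t: "ccs_trans (swap_proc a b P) \<alpha> P'" "b \<notin> fn_pre \<alpha>" "R = Res b P'" by auto
  have t2: "ccs_trans P (swap_pre a b \<alpha>) (swap_proc a b P')" using trans_swap[OF t(1), of a b] by simp
  have fa: "fn_pre (swap_pre a b \<alpha>) \<subseteq> fn_proc P" "fn_proc (swap_proc a b P') \<subseteq> fn_proc P"
    using trans_fn[OF t2] by auto
  have "a \<notin> fn_pre (swap_pre a b \<alpha>)" using t(2) by (auto simp: swap_name_def)
  moreover have "a \<notin> fn_proc P'"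
  proof
    assume "a \<in> fn_proc P'"
    then have "b \<in> fn_proc (swap_proc a b P')" by (auto simp: fn_swap swap_name_def image_iff)
    then show False using fa b by blast
  qed
  moreover have "swap_pre a b \<alpha> = \<alpha>"
  proof (rule swap_pre_id)
    have "fn_pre \<alpha> \<subseteq> swap_name a b ` fn_proc P" using trans_fn[OF t(1)] by (simp add: fn_swap)
    then show "a \<notin> fn_pre \<alpha>" using b by (auto simp: swap_name_def split: if_splits)
    show "b \<notin> fn_pre \<alpha>" by (fact t(2))
  qed
  moreover have "scong (Res a (swap_proc a b P')) R"
    using sc_alpha[of b "swap_proc a b P'" a] fa b t(3) by auto
  ultimately show "\<exists>Q'. ccs_trans (Res a P) \<alpha> Q' \<and> scong R Q'"
    using t2 ccs_trans.t_res[of P \<alpha> "swap_proc a b P'" a] scong_scong_sm.sc_sym by metis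
qed

lemma sim_refl: "sim P P"
  unfolding sim_def by (blast intro: scong_scong_sm.sc_refl)

lemma scong_sim:
  "scong P Q \<Longrightarrow> sim P Q \<and> sim Q P"
  "scong_sm M N \<Longrightarrow> sim (Sum M) (Sum N) \<and> sim (Sum N) (Sum M)"
proof (induction rule: scong_scong_sm.inducts)
  case (sc_sym P Q) then show ?case by blast
next
  case (ss_sym P Q) then show ?case by blast
next
  case (sc_trans P Q R)
  then show ?case by (meson sim_trans)
next
  case (ss_trans M N K)
  then show ?case by (meson sim_trans)
next
  case (sc_sum M N)
  then show ?case by blast
next
  case (sc_par P P' Q Q')
  then show ?case using sim_par scong_scong_sm.sc_sym by blast
next
  case (sc_res P Q a)
  then show ?case unfolding sim_def by (simp only: trans_Res) (blast intro: scong_scong_sm.sc_res)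
next
  case (sc_par_assoc P Q R)
  then show ?case using sim_assoc1 sim_assoc2 by blast
next
  case (sc_par_comm P Q)
  then show ?case using sim_comm by blast
next
  case (sc_par_nil P)
  then show ?case using sim_nil1 sim_nil2 by blast
next
  case (sc_res_nil a)
  then show ?case unfolding sim_def by auto
next
  case (sc_res_comm a b P)
  then show ?case using sim_res_comm by blast
next
  case (sc_res_par a P Q)
  then show ?case using sim_res_par1 sim_res_par2 by blast
next
  case (sc_alpha b P a)
  then show ?case using sim_alpha1 sim_alpha2 by blast
next
  case (ss_plus M M' N N')
  then show ?case using sim_plus by blast
next
  case (ss_pref P Q \<alpha>)
  then show ?case using sim_pref scong_scong_sm.sc_sym by blast
qed (auto simp: sim_def intro: scong_scong_sm.intros)

lemma scong_trans_match: "scong P Q \<Longrightarrow> ccs_trans P \<alpha> P' \<Longrightarrow> \<exists>Q'. ccs_trans Q \<alpha> Q' \<and> scong P' Q'"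
  using scong_sim(1) simD by blast

lemmas sc_intros = scong_scong_sm.intros

lemma fn_resL[simp]: "fn_proc (resL A X) = fn_proc X - set A"
  by (induction A) auto
lemma bn_resL[simp]: "bn_proc (resL A X) = set A \<union> bn_proc X"
  by (induction A) auto
lemma pure_resL[simp]: "pure_proc (resL A X) = pure_proc X"
  by (induction A) auto
lemma subst_resL[simp]: "subst_proc Y S (resL A X) = resL A (subst_proc Y S X)"
  by (induction A) auto
lemma resL_append: "resL (A @ B) X = resL A (resL B X)"
  by (induction A) auto
lemma swap_resL: "a \<notin> set A \<Longrightarrow> b \<notin> set A \<Longrightarrow> swap_proc a b (resL A X) = resL A (swap_proc a b X)"
  by (induction A) (auto simp: swap_name_def)
lemma scong_resL: "scong X Y \<Longrightarrow> scong (resL A X) (resL A Y)"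
  by (induction A) (auto intro: sc_intros)
lemma trans_resL: "ccs_trans X \<alpha> X' \<Longrightarrow> set A \<inter> fn_pre \<alpha> = {} \<Longrightarrow> ccs_trans (resL A X) \<alpha> (resL A X')"
  by (induction A) (auto intro: ccs_trans.intros)
lemma red_resL: "red X Y \<Longrightarrow> red (resL A X) (resL A Y)"
  by (induction A) (auto intro: red.intros)
lemma subst_pure: "pure_proc P \<Longrightarrow> subst_proc X S P = P" "pure_sm M \<Longrightarrow> subst_sm X S M = M"
  by (induction P and M rule: proc.induct sm.induct) auto

lemma extr_right: "set A \<inter> fn_proc Y = {} \<Longrightarrow> scong (Par Y (resL A X)) (resL A (Par Y X))"
proof (induction A)
  case Nil then show ?case by (simp add: sc_intros)
next
  case (Cons a A)
  have "scong (Par Y (Res a (resL A X))) (Res a (Par Y (resL A X)))"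
    using Cons.prems by (auto intro: sc_res_par)
  moreover have "scong (Res a (Par Y (resL A X))) (Res a (resL A (Par Y X)))"
    using Cons by (auto intro: sc_res)
  ultimately show ?case by (auto intro: sc_trans)
qed

lemma extr_left: "set A \<inter> fn_proc Y = {} \<Longrightarrow> scong (Par (resL A X) Y) (resL A (Par X Y))"
proof -
  assume h: "set A \<inter> fn_proc Y = {}"
  have "scong (Par (resL A X) Y) (Par Y (resL A X))" by (rule sc_par_comm)
  moreover have "scong (Par Y (resL A X)) (resL A (Par Y X))" using h by (rule extr_right)
  moreover have "scong (resL A (Par Y X)) (resL A (Par X Y))" by (rule scong_resL) (rule sc_par_comm)
  ultimately show ?thesis by (blast intro: sc_trans)
qed

lemmas [trans] = ss_trans sc_trans

lemma sum_inv: "ccs_trans S \<alpha> P' \<Longrightarrow> S = Sum M \<Longrightarrow> \<exists>M'. scong_sm M (Plus (Pref \<alpha> P') M')"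
proof (induction arbitrary: M rule: ccs_trans.induct)
  case (t_pref \<alpha> P)
  then show ?case using ss_zero[of "Pref \<alpha> P"] ss_sym by blast
next
  case (t_sumL M1 \<alpha> P' N)
  then obtain M' where "scong_sm M1 (Plus (Pref \<alpha> P') M')" by blast
  then have "scong_sm (Plus M1 N) (Plus (Plus (Pref \<alpha> P') M') N)" by (auto intro: sc_intros)
  then have "scong_sm (Plus M1 N) (Plus (Pref \<alpha> P') (Plus M' N))" by (blast intro: sc_intros)
  then show ?case using t_sumL by auto
next
  case (t_sumR N \<alpha> P' M1)
  then obtain N' where "scong_sm N (Plus (Pref \<alpha> P') N')" by blast
  then have "scong_sm (Plus M1 N) (Plus M1 (Plus (Pref \<alpha> P') N'))" by (auto intro: sc_intros)
  also have "scong_sm \<dots> (Plus (Plus M1 (Pref \<alpha> P')) N')" by (blast intro: sc_intros)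
  also have "scong_sm \<dots> (Plus (Plus (Pref \<alpha> P') M1) N')" by (blast intro: sc_intros)
  also have "scong_sm \<dots> (Plus (Pref \<alpha> P') (Plus M1 N'))" by (blast intro: sc_intros)
  finally show ?case using t_sumR by auto
qed auto

lemma sum_form: "ccs_trans (Sum M) \<alpha> P' \<Longrightarrow>
   \<exists>A Q M' R. scong (Sum M) (resL A (Par (Sum (Plus (Pref \<alpha> Q) M')) R)) \<and> set A = {} \<and> scong P' (resL A (Par Q R))"
proof -
  assume "ccs_trans (Sum M) \<alpha> P'"
  then obtain M' where m: "scong_sm M (Plus (Pref \<alpha> P') M')" using sum_inv by blast
  have "scong (Sum M) (Sum (Plus (Pref \<alpha> P') M'))" using m by (rule sc_sum)
  also have "scong \<dots> (Par (Sum (Plus (Pref \<alpha> P') M')) Nil)" by (rule sc_sym, rule sc_par_nil)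
  finally have "scong (Sum M) (resL [] (Par (Sum (Plus (Pref \<alpha> P') M')) Nil))" by simp
  moreover have "scong P' (resL [] (Par P' Nil))" by (simp add: sc_par_nil sc_sym)
  ultimately show ?thesis by fastforce
qed

lemma exists_fresh: "finite (F :: nat set) \<Longrightarrow> \<exists>c. c \<notin> F"
  using ex_new_if_finite infinite_UNIV_nat by blast

lemma fn_finite: "finite (fn_proc P)" "finite (fn_sm M)"
proof (induction P and M rule: proc.induct sm.induct)
  case (Pref x1 x2) then show ?case by (cases x1) auto
qed auto

lemma vis_inv: "ccs_trans P \<alpha> P' \<Longrightarrow> \<alpha> \<noteq> Tau \<Longrightarrow> finite F \<Longrightarrow>
   \<exists>A Q M R. scong P (resL A (Par (Sum (Plus (Pref \<alpha> Q) M)) R)) \<and> set A \<inter> (F \<union> fn_pre \<alpha>) = {}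
      \<and> scong P' (resL A (Par Q R))"
proof (induction arbitrary: F rule: ccs_trans.induct)
  case (t_pref \<alpha> P)
  then show ?case using sum_form[of "Pref \<alpha> P" \<alpha> P] by fastforce
next
  case (t_sumL M \<alpha> P' N)
  then have "ccs_trans (Sum (Plus M N)) \<alpha> P'" by (auto intro: ccs_trans.intros)
  then show ?case using sum_form by fastforce
next
  case (t_sumR N \<alpha> P' M)
  then have "ccs_trans (Sum (Plus M N)) \<alpha> P'" by (auto intro: ccs_trans.intros)
  then show ?case using sum_form by fastforce
next
  case (t_parL P \<alpha> P' Q0)
  then obtain A Q M R where h: "scong P (resL A (Par (Sum (Plus (Pref \<alpha> Q) M)) R))"
     "set A \<inter> ((F \<union> fn_proc Q0) \<union> fn_pre \<alpha>) = {}" "scong P' (resL A (Par Q R))"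
    using fn_finite by (meson finite_UnI)
  have "scong (Par P Q0) (Par (resL A (Par (Sum (Plus (Pref \<alpha> Q) M)) R)) Q0)" using h by (blast intro: sc_par sc_refl)
  also have "scong \<dots> (resL A (Par (Par (Sum (Plus (Pref \<alpha> Q) M)) R) Q0))" using h by (auto intro: extr_left)
  also have "scong \<dots> (resL A (Par (Sum (Plus (Pref \<alpha> Q) M)) (Par R Q0)))" by (rule scong_resL, rule sc_par_assoc)
  finally have 1: "scong (Par P Q0) (resL A (Par (Sum (Plus (Pref \<alpha> Q) M)) (Par R Q0)))" .
  have "scong (Par P' Q0) (Par (resL A (Par Q R)) Q0)" using h by (blast intro: sc_par sc_refl)
  also have "scong \<dots> (resL A (Par (Par Q R) Q0))" using h by (auto intro: extr_left)
  also have "scong \<dots> (resL A (Par Q (Par R Q0)))" by (rule scong_resL, rule sc_par_assoc)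
  finally have 2: "scong (Par P' Q0) (resL A (Par Q (Par R Q0)))" .
  show ?case using 1 2 h by blast
next
  case (t_parR Q0 \<alpha> Q' P)
  then obtain A Q M R where h: "scong Q0 (resL A (Par (Sum (Plus (Pref \<alpha> Q) M)) R))"
     "set A \<inter> ((F \<union> fn_proc P) \<union> fn_pre \<alpha>) = {}" "scong Q' (resL A (Par Q R))"
    using fn_finite by (meson finite_UnI)
  have "scong (Par P Q0) (Par (resL A (Par (Sum (Plus (Pref \<alpha> Q) M)) R)) P)" using h by (blast intro: sc_trans[OF sc_par_comm] sc_par sc_refl)
  also have "scong \<dots> (resL A (Par (Par (Sum (Plus (Pref \<alpha> Q) M)) R) P))" using h by (auto intro: extr_left)
  also have "scong \<dots> (resL A (Par (Sum (Plus (Pref \<alpha> Q) M)) (Par R P)))" by (rule scong_resL, rule sc_par_assoc)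
  finally have 1: "scong (Par P Q0) (resL A (Par (Sum (Plus (Pref \<alpha> Q) M)) (Par R P)))" .
  have "scong (Par P Q') (Par (resL A (Par Q R)) P)" using h by (blast intro: sc_trans[OF sc_par_comm] sc_par sc_refl)
  also have "scong \<dots> (resL A (Par (Par Q R) P))" using h by (auto intro: extr_left)
  also have "scong \<dots> (resL A (Par Q (Par R P)))" by (rule scong_resL, rule sc_par_assoc)
  finally have 2: "scong (Par P Q') (resL A (Par Q (Par R P)))" .
  show ?case using 1 2 h by blast
next
  case (t_res P \<alpha> P' c)
  have fin: "finite (F \<union> fn_proc P \<union> {c})" using fn_finite t_res.prems by simp
  obtain c' where c': "c' \<notin> F \<union> fn_proc P \<union> {c}" using exists_fresh[OF fin] by metis
  obtain A Q M R where h: "scong P (resL A (Par (Sum (Plus (Pref \<alpha> Q) M)) R))"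
     "set A \<inter> ((F \<union> {c, c'}) \<union> fn_pre \<alpha>) = {}" "scong P' (resL A (Par Q R))"
    using t_res.IH[of "F \<union> {c, c'}"] t_res.prems by auto
  have fa: "fn_pre \<alpha> \<subseteq> fn_proc P" "fn_proc P' \<subseteq> fn_proc P" using trans_fn[OF t_res.hyps(1)] by blast+
  have cA: "c \<notin> set A" "c' \<notin> set A" using h by auto
  have sa: "swap_pre c c' \<alpha> = \<alpha>" by (rule swap_pre_id) (use t_res.hyps(2) fa c' in auto)
  define X where "X = Par (Sum (Plus (Pref \<alpha> Q) M)) R"
  have fX: "fn_proc (resL A X) = fn_proc P" using scong_pure_fn(1)[OF h(1)] X_def by simp
  have "scong (Res c P) (Res c (resL A X))" using h X_def by (simp add: sc_res)
  also have "scong \<dots> (Res c' (swap_proc c c' (resL A X)))" using c' fX by (intro sc_alpha) simp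
  also have "swap_proc c c' (resL A X) = resL A (Par (Sum (Plus (Pref \<alpha> (swap_proc c c' Q)) (swap_sm c c' M))) (swap_proc c c' R))"
    using cA sa by (simp add: swap_resL X_def)
  finally have 1: "scong (Res c P) (resL (c' # A) (Par (Sum (Plus (Pref \<alpha> (swap_proc c c' Q)) (swap_sm c c' M))) (swap_proc c c' R)))" by simp
  have fY: "fn_proc (resL A (Par Q R)) = fn_proc P'" using scong_pure_fn(1)[OF h(3)] by simp
  have "scong (Res c P') (Res c (resL A (Par Q R)))" using h by (simp add: sc_res)
  also have "scong \<dots> (Res c' (swap_proc c c' (resL A (Par Q R))))" using c' fY fa by (intro sc_alpha) auto
  also have "swap_proc c c' (resL A (Par Q R)) = resL A (Par (swap_proc c c' Q) (swap_proc c c' R))"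
    using cA by (simp add: swap_resL)
  finally have 2: "scong (Res c P') (resL (c' # A) (Par (swap_proc c c' Q) (swap_proc c c' R)))" by simp
  have 3: "set (c' # A) \<inter> (F \<union> fn_pre \<alpha>) = {}" using h c' fa by auto
  show ?case using 1 2 3 by blast
qed auto





lemma rearr: "scong (Par (Par a b) (Par c d)) (Par (Par a c) (Par b d))"
proof -
  have "scong (Par (Par a b) (Par c d)) (Par a (Par b (Par c d)))" by (rule sc_par_assoc)
  also have "scong \<dots> (Par a (Par (Par b c) d))" by (rule sc_par[OF sc_refl sc_sym[OF sc_par_assoc]])
  also have "scong \<dots> (Par a (Par (Par c b) d))" by (rule sc_par[OF sc_refl sc_par[OF sc_par_comm sc_refl]])
  also have "scong \<dots> (Par a (Par c (Par b d)))" by (rule sc_par[OF sc_refl sc_par_assoc])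
  also have "scong \<dots> (Par (Par a c) (Par b d))" by (rule sc_sym[OF sc_par_assoc])
  finally show ?thesis .
qed

lemma fn_scong: "scong P Q \<Longrightarrow> fn_proc P = fn_proc Q"
  using scong_pure_fn(1) by blast
lemma pure_scong: "scong P Q \<Longrightarrow> pure_proc P = pure_proc Q"
  using scong_pure_fn(1) by blast

lemma com_red: "ccs_trans P (In a) P1 \<Longrightarrow> ccs_trans Q (Out a) Q1 \<Longrightarrow> red (Par P Q) (Par P1 Q1)"
proof -
  assume tP: "ccs_trans P (In a) P1" and tQ: "ccs_trans Q (Out a) Q1"
  obtain A Pa M R1 where hP: "scong P (resL A (Par (Sum (Plus (Pref (In a) Pa) M)) R1))"
     "set A \<inter> (fn_proc Q \<union> fn_pre (In a)) = {}" "scong P1 (resL A (Par Pa R1))"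
    using vis_inv[OF tP _ fn_finite(1)[of Q]] by blast
  define S1 where "S1 = Sum (Plus (Pref (In a) Pa) M)"
  define X1 where "X1 = Par S1 R1"
  obtain B Qa N R2 where hQ: "scong Q (resL B (Par (Sum (Plus (Pref (Out a) Qa) N)) R2))"
     "set B \<inter> (fn_proc X1 \<union> fn_pre (Out a)) = {}" "scong Q1 (resL B (Par Qa R2))"
    using vis_inv[OF tQ _ fn_finite(1)[of X1]] by blast
  define S2 where "S2 = Sum (Plus (Pref (Out a) Qa) N)"
  define X2 where "X2 = Par S2 R2"
  have fQ: "fn_proc (resL B X2) = fn_proc Q" using fn_scong[OF hQ(1)] X2_def S2_def by simp
  have fQ1: "fn_proc (resL B (Par Qa R2)) \<subseteq> fn_proc Q" using fn_scong[OF hQ(3)] trans_fn[OF tQ] by simp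
  have fX1: "fn_proc (Par Pa R1) \<subseteq> fn_proc X1" using X1_def S1_def by auto
  have "scong (Par P Q) (Par (resL A X1) (resL B X2))"
    using hP hQ X1_def S1_def X2_def S2_def by (intro sc_par) auto
  also have "scong \<dots> (resL A (Par X1 (resL B X2)))" using hP(2) fQ by (intro extr_left) auto
  also have "scong \<dots> (resL A (resL B (Par X1 X2)))" using hQ(2) by (intro scong_resL extr_right) auto
  also have "scong \<dots> (resL A (resL B (Par (Par S1 S2) (Par R1 R2))))"
    unfolding X1_def X2_def by (intro scong_resL rearr)
  finally have 1: "scong (Par P Q) (resL A (resL B (Par (Par S1 S2) (Par R1 R2))))" .
  have 2: "red (resL A (resL B (Par (Par S1 S2) (Par R1 R2)))) (resL A (resL B (Par (Par Pa Qa) (Par R1 R2))))"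
    unfolding S1_def S2_def by (intro red_resL red_par red_com)
  have "scong (resL A (resL B (Par (Par Pa Qa) (Par R1 R2)))) (resL A (resL B (Par (Par Pa R1) (Par Qa R2))))"
    by (intro scong_resL rearr)
  also have "scong \<dots> (resL A (Par (Par Pa R1) (resL B (Par Qa R2))))"
    using hQ(2) fX1 by (intro scong_resL sc_sym[OF extr_right]) auto
  also have "scong \<dots> (Par (resL A (Par Pa R1)) (resL B (Par Qa R2)))"
    using hP(2) fQ1 by (intro sc_sym[OF extr_left]) auto
  also have "scong \<dots> (Par P1 Q1)" by (rule sc_par[OF sc_sym[OF hP(3)] sc_sym[OF hQ(3)]])
  finally have 3: "scong (resL A (resL B (Par (Par Pa Qa) (Par R1 R2)))) (Par P1 Q1)" .
  show ?thesis using 1 2 3 by (rule red_struct)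
qed

lemma tau_red: "ccs_trans P \<alpha> P' \<Longrightarrow> \<alpha> = Tau \<Longrightarrow> red P P'"
proof (induction rule: ccs_trans.induct)
  case (t_pref \<alpha> P)
  have "scong (Sum (Pref Tau P)) (Sum (Plus (Pref Tau P) Zero))" by (rule sc_sum[OF ss_sym[OF ss_zero]])
  then show ?case using t_pref red_struct[OF _ red_tau sc_refl] by simp
next
  case (t_sumL M \<alpha> P' N)
  then have "ccs_trans (Sum (Plus M N)) Tau P'" by (simp add: ccs_trans.t_sumL)
  then obtain M' where "scong_sm (Plus M N) (Plus (Pref Tau P') M')" using sum_inv[of _ Tau P' "Plus M N"] by blast
  then show ?case using red_struct[OF sc_sum red_tau sc_refl] by blast
next
  case (t_sumR N \<alpha> P' M)
  then have "ccs_trans (Sum (Plus M N)) Tau P'" by (simp add: ccs_trans.t_sumR)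
  then obtain M' where "scong_sm (Plus M N) (Plus (Pref Tau P') M')" using sum_inv[of _ Tau P' "Plus M N"] by blast
  then show ?case using red_struct[OF sc_sum red_tau sc_refl] by blast
next
  case (t_parL P \<alpha> P' Q)
  then show ?case by (simp add: red_par)
next
  case (t_parR Q \<alpha> Q' P)
  then have "red (Par Q P) (Par Q' P)" by (simp add: red_par)
  then show ?case using red_struct[OF sc_par_comm _ sc_par_comm] by blast
next
  case (t_comL P a P' Q Q')
  then show ?case using com_red by blast
next
  case (t_comR P a P' Q Q')
  then have "red (Par Q P) (Par Q' P')" using com_red by blast
  then show ?case using red_struct[OF sc_par_comm _ sc_par_comm] by blast
next
  case (t_res P \<alpha> P' a)
  then show ?case by (simp add: red_res)
qed

lemma red_tau_trans: "red P Q \<Longrightarrow> \<exists>Q'. ccs_trans P Tau Q' \<and> scong Q' Q"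
proof (induction rule: red.induct)
  case (red_com a P M Q N)
  have "ccs_trans (Par (Sum (Plus (Pref (In a) P) M)) (Sum (Plus (Pref (Out a) Q) N))) Tau (Par P Q)"
    by (rule ccs_trans.t_comL) (auto intro: ccs_trans.intros)
  then show ?case using sc_refl by blast
next
  case (red_tau P M)
  then show ?case using sc_refl by (auto intro: ccs_trans.intros)
next
  case (red_par P P' Q)
  then obtain R where "ccs_trans P Tau R" "scong R P'" by blast
  then show ?case using ccs_trans.t_parL sc_par[OF _ sc_refl] by blast
next
  case (red_res P P' a)
  then obtain R where "ccs_trans P Tau R" "scong R P'" by blast
  then show ?case using ccs_trans.t_res[of P Tau R a] sc_res by auto
next
  case (red_struct P P' Q' Q)
  then obtain Q'' where "ccs_trans P' Tau Q''" "scong Q'' Q'" by blast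
  moreover obtain R where "ccs_trans P Tau R" "scong Q'' R" using scong_trans_match[OF sc_sym[OF red_struct.hyps(1)]] calculation by blast
  ultimately show ?case using sc_trans[OF sc_sym[OF \<open>scong Q'' R\<close>] sc_trans[OF \<open>scong Q'' Q'\<close> red_struct.hyps(3)]] by blast
qed




lemma bn_swap: "bn_proc (swap_proc a b P) = swap_name a b ` bn_proc P"
   "bn_sm (swap_sm a b M) = swap_name a b ` bn_sm M"
  by (induction P and M rule: proc.induct sm.induct) (auto simp: image_Un)

lemma bn_finite: "finite (bn_proc P)" "finite (bn_sm M)"
  by (induction P and M rule: proc.induct sm.induct) auto

lemma rename:
  "finite F \<Longrightarrow> \<exists>P'. scong P P' \<and> bn_proc P' \<inter> F = {}"
  "finite F \<Longrightarrow> \<exists>M'. scong_sm M M' \<and> bn_sm M' \<inter> F = {}"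
proof (induction P and M rule: proc.induct sm.induct)
  case (Sum M)
  then obtain M' where "scong_sm M M'" "bn_sm M' \<inter> F = {}" by blast
  then show ?case using sc_sum by fastforce
next
  case (Par P Q)
  then obtain P' Q' where "scong P P'" "bn_proc P' \<inter> F = {}" "scong Q Q'" "bn_proc Q' \<inter> F = {}" by blast
  then show ?case using sc_par[of P P' Q Q'] by (intro exI[of _ "Par P' Q'"]) auto
next
  case (Res c P)
  then obtain P1 where h: "scong P P1" "bn_proc P1 \<inter> F = {}" by blast
  have fin: "finite (F \<union> fn_proc P1 \<union> bn_proc P1)" using Res.prems fn_finite bn_finite by simp
  obtain c' where c': "c' \<notin> F \<union> fn_proc P1 \<union> bn_proc P1" using exists_fresh[OF fin] by metis
  have "scong (Res c P) (Res c P1)" by (rule sc_res[OF h(1)])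
  also have "scong \<dots> (Res c' (swap_proc c c' P1))" using c' by (intro sc_alpha) auto
  finally have 1: "scong (Res c P) (Res c' (swap_proc c c' P1))" .
  have "bn_proc (Res c' (swap_proc c c' P1)) \<inter> F = {}"
    using c' h(2) by (auto simp: bn_swap swap_name_def)
  then show ?case using 1 by blast
next
  case (Var x)
  then show ?case using sc_refl by fastforce
next
  case Zero
  then show ?case using ss_refl by fastforce
next
  case (Pref x1 x2)
  then obtain P' where "scong x2 P'" "bn_proc P' \<inter> F = {}" by blast
  then show ?case using ss_pref by fastforce
next
  case (Plus M N)
  then obtain M' N' where "scong_sm M M'" "bn_sm M' \<inter> F = {}" "scong_sm N N'" "bn_sm N' \<inter> F = {}" by blast
  then show ?case using ss_plus[of M M' N N'] by (intro exI[of _ "Plus M' N'"]) auto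
qed

lemma bis_step: "ccs_bisimilar P Q \<Longrightarrow> ccs_trans P \<alpha> P' \<Longrightarrow> \<exists>Q'. ccs_trans Q \<alpha> Q' \<and> ccs_bisimilar P' Q'"
  unfolding ccs_bisimilar_def ccs_bisim_def by blast

lemma bis_sym: "ccs_bisimilar P Q \<Longrightarrow> ccs_bisimilar Q P"
proof -
  assume "ccs_bisimilar P Q"
  then obtain Rel where "ccs_bisim Rel" "Rel P Q" unfolding ccs_bisimilar_def by blast
  then have "ccs_bisim (\<lambda>x y. Rel y x)" "(\<lambda>x y. Rel y x) Q P" unfolding ccs_bisim_def by blast+
  then show ?thesis unfolding ccs_bisimilar_def by blast
qed

lemma bis_trans: "ccs_bisimilar P Q \<Longrightarrow> ccs_bisimilar Q R \<Longrightarrow> ccs_bisimilar P R"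
proof -
  assume "ccs_bisimilar P Q" "ccs_bisimilar Q R"
  let ?R = "\<lambda>x z. \<exists>y. ccs_bisimilar x y \<and> ccs_bisimilar y z"
  have "ccs_bisim ?R"
    unfolding ccs_bisim_def
  proof (intro conjI allI impI)
    fix P Q \<alpha> P' assume "?R P Q \<and> ccs_trans P \<alpha> P'"
    then show "\<exists>Q'. ccs_trans Q \<alpha> Q' \<and> ?R P' Q'" using bis_step by metis
  next
    fix P Q \<alpha> Q' assume "?R P Q \<and> ccs_trans Q \<alpha> Q'"
    then show "\<exists>P'. ccs_trans P \<alpha> P' \<and> ?R P' Q'" using bis_step bis_sym by metis
  qed
  moreover have "?R P R" using \<open>ccs_bisimilar P Q\<close> \<open>ccs_bisimilar Q R\<close> by blast
  ultimately show ?thesis unfolding ccs_bisimilar_def[of P R] by blast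
qed

lemma bis_scong: "scong P Q \<Longrightarrow> ccs_bisimilar P Q"
proof -
  assume "scong P Q"
  have "ccs_bisim scong"
    unfolding ccs_bisim_def
  proof (intro conjI allI impI)
    fix P Q \<alpha> P' assume "scong P Q \<and> ccs_trans P \<alpha> P'"
    then show "\<exists>Q'. ccs_trans Q \<alpha> Q' \<and> scong P' Q'" using scong_trans_match by blast
  next
    fix P Q \<alpha> Q' assume a: "scong P Q \<and> ccs_trans Q \<alpha> Q'"
    then obtain P' where "ccs_trans P \<alpha> P'" "scong Q' P'" using scong_trans_match[OF sc_sym] by blast
    then show "\<exists>P'. ccs_trans P \<alpha> P' \<and> scong P' Q'" using sc_sym by blast
  qed
  then show ?thesis unfolding ccs_bisimilar_def using \<open>scong P Q\<close> by blast
qed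

lemma bis_par: "ccs_bisimilar P Q \<Longrightarrow> ccs_bisimilar (Par P S) (Par Q S)"
proof -
  assume b: "ccs_bisimilar P Q"
  define Rl where "Rl = (\<lambda>X Y. \<exists>P Q S. X = Par P S \<and> Y = Par Q S \<and> ccs_bisimilar P Q)"
  have step: "\<exists>Y'. ccs_trans Y \<alpha> Y' \<and> Rl X' Y'" if r: "Rl X Y" and t: "ccs_trans X \<alpha> X'" for X Y \<alpha> X'
  proof -
    obtain P Q S where h: "X = Par P S" "Y = Par Q S" "ccs_bisimilar P Q" using r unfolding Rl_def by blast
    from t h(1) have "ccs_trans (Par P S) \<alpha> X'" by simp
    then show ?thesis
    proof (cases rule: trans_ParE)
      case (L P')
      then obtain Q' where "ccs_trans Q \<alpha> Q'" "ccs_bisimilar P' Q'" using bis_step h by blast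
      then show ?thesis using L h Rl_def by (blast intro: ccs_trans.t_parL)
    next
      case (R S')
      then show ?thesis using h Rl_def by (blast intro: ccs_trans.t_parR)
    next
      case (C1 a P' S')
      then obtain Q' where "ccs_trans Q (In a) Q'" "ccs_bisimilar P' Q'" using bis_step h by blast
      then show ?thesis using C1 h Rl_def by (blast intro: ccs_trans.t_comL)
    next
      case (C2 a P' S')
      then obtain Q' where "ccs_trans Q (Out a) Q'" "ccs_bisimilar P' Q'" using bis_step h by blast
      then show ?thesis using C2 h Rl_def by (blast intro: ccs_trans.t_comR)
    qed
  qed
  have sym: "Rl Y X" if "Rl X Y" for X Y using that bis_sym Rl_def by blast
  have "ccs_bisim Rl"
    unfolding ccs_bisim_def
  proof (intro conjI allI impI)
    fix P Q \<alpha> P' assume "Rl P Q \<and> ccs_trans P \<alpha> P'"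
    then show "\<exists>Q'. ccs_trans Q \<alpha> Q' \<and> Rl P' Q'" using step by blast
  next
    fix P Q \<alpha> Q' assume "Rl P Q \<and> ccs_trans Q \<alpha> Q'"
    then obtain P' where "ccs_trans P \<alpha> P'" "Rl Q' P'" using step sym by blast
    then show "\<exists>P'. ccs_trans P \<alpha> P' \<and> Rl P' Q'" using sym by blast
  qed
  moreover have "Rl (Par P S) (Par Q S)" using b Rl_def by blast
  ultimately show ?thesis unfolding ccs_bisimilar_def by blast
qed




fun dual :: "pre \<Rightarrow> pre" where
  "dual (In a) = Out a" | "dual (Out a) = In a" | "dual Tau = Tau"

lemma dual_inj: "dual x = dual y \<Longrightarrow> x = y"
  by (cases x; cases y) auto

lemma ltsC_char: "ltsC P Ce Qe \<Longrightarrow> (Ce = CHole \<and> red P Qe) \<or>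
  (\<exists>\<alpha> A Q M R. \<alpha> \<noteq> Tau \<and> Ce = CPar (Sum (Pref (dual \<alpha>) (Var 1))) \<and>
     scong P (resL A (Par (Sum (Plus (Pref \<alpha> Q) M)) R)) \<and> set A \<inter> fn_pre \<alpha> = {} \<and>
     Qe = resL A (Par (Par Q R) (Var 1)))"
proof (induction rule: ltsC.induct)
  case (C_rcv P A a Q M R)
  then show ?case by (intro disjI2 exI[of _ "In a"]) auto
next
  case (C_snd P A a Q M R)
  then show ?case by (intro disjI2 exI[of _ "Out a"]) auto
qed auto

lemma ltsC_intro: "\<alpha> \<noteq> Tau \<Longrightarrow> scong P (resL A (Par (Sum (Plus (Pref \<alpha> Q) M)) R)) \<Longrightarrow> set A \<inter> fn_pre \<alpha> = {} \<Longrightarrow>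
   ltsC P (CPar (Sum (Pref (dual \<alpha>) (Var 1)))) (resL A (Par (Par Q R) (Var 1)))"
proof (cases \<alpha>)
  case (In a)
  assume "scong P (resL A (Par (Sum (Plus (Pref \<alpha> Q) M)) R))" "set A \<inter> fn_pre \<alpha> = {}"
  then show ?thesis using In ltsC.C_rcv[of P A a Q M R] by simp
next
  case (Out a)
  assume "scong P (resL A (Par (Sum (Plus (Pref \<alpha> Q) M)) R))" "set A \<inter> fn_pre \<alpha> = {}"
  then show ?thesis using Out ltsC.C_snd[of P A a Q M R] by simp
qed auto

lemma form_trans: "set A \<inter> fn_pre \<alpha> = {} \<Longrightarrow> scong P (resL A (Par (Sum (Plus (Pref \<alpha> Q) M)) R)) \<Longrightarrow>
   \<exists>P'. ccs_trans P \<alpha> P' \<and> scong P' (resL A (Par Q R))"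
proof -
  assume a: "set A \<inter> fn_pre \<alpha> = {}" and s: "scong P (resL A (Par (Sum (Plus (Pref \<alpha> Q) M)) R))"
  have "ccs_trans (resL A (Par (Sum (Plus (Pref \<alpha> Q) M)) R)) \<alpha> (resL A (Par Q R))"
    using a by (intro trans_resL ccs_trans.t_parL ccs_trans.t_sumL ccs_trans.t_pref)
  then obtain P' where "ccs_trans P \<alpha> P'" "scong (resL A (Par Q R)) P'" using scong_trans_match[OF sc_sym[OF s]] by blast
  then show ?thesis using sc_sym by blast
qed

lemma form_pure: "pure_proc P \<Longrightarrow> scong P (resL A (Par (Sum (Plus (Pref \<alpha> Q) M)) R)) \<Longrightarrow> pure_proc Q \<and> pure_proc R"
  using pure_scong by fastforce

lemma red_pure: "red P Q \<Longrightarrow> pure_proc P \<Longrightarrow> pure_proc Q"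
  using red_tau_trans trans_pure pure_scong by blast

lemma fill_Nil: "scong (resL A (Par (Par Q R) Nil)) (resL A (Par Q R))"
  by (rule scong_resL, rule sc_par_nil)




lemma ltsCI_tau: "pure_proc P \<Longrightarrow> red P P' \<Longrightarrow> ltsCI P CHole P'"
proof -
  assume p: "pure_proc P" and r: "red P P'"
  have pp: "pure_proc P'" using red_pure[OF r p] .
  show ?thesis unfolding ltsCI_def
    using p r pp ltsC.C_tau[OF r] sc_refl[of P'] subst_pure(1)[OF pp, of 1 Nil]
    by (intro conjI exI[of _ CHole] exI[of _ P'] exI[of _ Nil]) (auto simp: capture_free_def)
qed

lemma ltsCI_vis: "pure_proc P \<Longrightarrow> \<alpha> \<noteq> Tau \<Longrightarrow> scong P (resL A (Par (Sum (Plus (Pref \<alpha> Q) M)) R)) \<Longrightarrow>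
   set A \<inter> fn_pre \<alpha> = {} \<Longrightarrow> pure_proc S \<Longrightarrow> (set A \<union> bn_proc Q \<union> bn_proc R) \<inter> fn_proc S = {} \<Longrightarrow>
   ltsCI P (CPar (Sum (Pref (dual \<alpha>) S))) (resL A (Par (Par Q R) S))"
proof -
  assume p: "pure_proc P" and a: "\<alpha> \<noteq> Tau" and s: "scong P (resL A (Par (Sum (Plus (Pref \<alpha> Q) M)) R))"
    and f: "set A \<inter> fn_pre \<alpha> = {}" and pS: "pure_proc S" and cf: "(set A \<union> bn_proc Q \<union> bn_proc R) \<inter> fn_proc S = {}"
  have pq: "pure_proc Q" "pure_proc R" using form_pure[OF p s] by auto
  have l: "ltsC P (CPar (Sum (Pref (dual \<alpha>) (Var 1)))) (resL A (Par (Par Q R) (Var 1)))"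
    using ltsC_intro[OF a s f] .
  have e: "subst_proc 1 S (resL A (Par (Par Q R) (Var 1))) = resL A (Par (Par Q R) S)"
    using pq by (simp add: subst_pure)
  have c: "capture_free S (resL A (Par (Par Q R) (Var 1)))"
    using cf by (auto simp: capture_free_def)
  show ?thesis unfolding ltsCI_def
    using p l pS c e sc_refl[of "resL A (Par (Par Q R) S)"]
    by (intro conjI exI[of _ "CPar (Sum (Pref (dual \<alpha>) (Var 1)))"] exI[of _ "resL A (Par (Par Q R) (Var 1))"] exI[of _ S]) auto
qed

lemma ltsCI_elim: "ltsCI P C P' \<Longrightarrow>
   (C = CHole \<and> (\<exists>Qe. red P Qe \<and> scong Qe P')) \<or>
   (\<exists>\<alpha> A Q M R S. \<alpha> \<noteq> Tau \<and> C = CPar (Sum (Pref (dual \<alpha>) S)) \<and> pure_proc S \<and>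
      scong P (resL A (Par (Sum (Plus (Pref \<alpha> Q) M)) R)) \<and> set A \<inter> fn_pre \<alpha> = {} \<and>
      (set A \<union> bn_proc Q \<union> bn_proc R) \<inter> fn_proc S = {} \<and> scong (resL A (Par (Par Q R) S)) P')"
proof -
  assume "ltsCI P C P'"
  then obtain Ce Qe S where h: "pure_proc P" "ltsC P Ce Qe" "pure_proc S" "capture_free S Qe"
     "scong (subst_proc 1 S Qe) P'" "subst_ctx 1 S Ce = C" unfolding ltsCI_def by blast
  from ltsC_char[OF h(2)] show ?thesis
  proof (elim disjE exE conjE)
    assume "Ce = CHole" "red P Qe"
    then show ?thesis using h red_pure subst_pure(1) by fastforce
  next
    fix \<alpha> A Q M R
    assume a: "\<alpha> \<noteq> Tau" "Ce = CPar (Sum (Pref (dual \<alpha>) (Var 1)))"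
      "scong P (resL A (Par (Sum (Plus (Pref \<alpha> Q) M)) R))" "set A \<inter> fn_pre \<alpha> = {}"
      "Qe = resL A (Par (Par Q R) (Var 1))"
    have pq: "pure_proc Q" "pure_proc R" using form_pure[OF h(1) a(3)] by auto
    have "subst_proc 1 S Qe = resL A (Par (Par Q R) S)" using a(5) pq by (simp add: subst_pure)
    moreover have "C = CPar (Sum (Pref (dual \<alpha>) S))" using h(6) a(2) by simp
    moreover have "(set A \<union> bn_proc Q \<union> bn_proc R) \<inter> fn_proc S = {}"
      using h(4) a(5) by (auto simp: capture_free_def)
    ultimately show ?thesis using a h(3) h(5) by metis
  qed
qed




lemma ltsCI_scong: "ltsCI P C P1 \<Longrightarrow> scong P1 P2 \<Longrightarrow> ltsCI P C P2"
proof -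
  assume a: "ltsCI P C P1" and b: "scong P1 P2"
  from a obtain Ce Qe S where h: "pure_proc P" "ltsC P Ce Qe" "pure_proc S" "capture_free S Qe"
     "scong (subst_proc 1 S Qe) P1" "subst_ctx 1 S Ce = C" unfolding ltsCI_def by blast
  have "scong (subst_proc 1 S Qe) P2" using sc_trans[OF h(5) b] .
  then show ?thesis unfolding ltsCI_def using h by blast
qed

lemma K:
  assumes LB: "L_bisim L_CCS Rel" and r: "Rel P0 Q0" and t: "ccs_trans P0 \<alpha> P0'"
  shows "\<exists>Q0' Q0''. ccs_trans Q0 \<alpha> Q0'' \<and> Rel P0' Q0' \<and> scong Q0' Q0''"
proof -
  have pP: "pure_proc P0" "pure_proc Q0" using LB r unfolding L_bisim_def by blast+
  have step: "\<exists>Q'. ltsCI Q0 C Q' \<and> Rel P' Q'" if "ltsCI P0 C P'" for C P'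
  proof -
    have C: "C \<in> L_CCS" using that unfolding L_CCS_def by blast
    have "\<forall>P Q C P'. Rel P Q \<and> ltsCI P C P' \<longrightarrow>
        (if C \<in> L_CCS then (\<exists>Q'. ltsCI Q C Q' \<and> Rel P' Q')
         else (\<exists>Q'. red (fill C Q) Q' \<and> Rel P' Q'))" using LB unfolding L_bisim_def by blast
    then have "if C \<in> L_CCS then (\<exists>Q'. ltsCI Q0 C Q' \<and> Rel P' Q')
         else (\<exists>Q'. red (fill C Q0) Q' \<and> Rel P' Q')" using r that by blast
    then show ?thesis using C by simp
  qed
  show ?thesis
  proof (cases "\<alpha> = Tau")
    case True
    then have "red P0 P0'" using tau_red t by blast
    then have "ltsCI P0 CHole P0'" using ltsCI_tau pP by blast
    then obtain Q' where q: "ltsCI Q0 CHole Q'" "Rel P0' Q'" using step by blast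
    from ltsCI_elim[OF q(1)] obtain Qe where "red Q0 Qe" "scong Qe Q'" by auto
    moreover obtain Q2 where "ccs_trans Q0 Tau Q2" "scong Q2 Qe" using red_tau_trans calculation(1) by blast
    moreover have "scong Q' Q2" using sc_sym[OF sc_trans[OF calculation(4) calculation(2)]] .
    ultimately show ?thesis using q True by blast
  next
    case False
    obtain A Pa M R where h: "scong P0 (resL A (Par (Sum (Plus (Pref \<alpha> Pa) M)) R))"
       "set A \<inter> ({} \<union> fn_pre \<alpha>) = {}" "scong P0' (resL A (Par Pa R))"
      using vis_inv[OF t False finite.emptyI] by blast
    have "ltsCI P0 (CPar (Sum (Pref (dual \<alpha>) Nil))) (resL A (Par (Par Pa R) Nil))"
      using ltsCI_vis[OF pP(1) False h(1) _ pure_sm.simps(1)[THEN iffD2, OF TrueI, folded pure_proc.simps(1)]] h(2) by simp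
    then have "ltsCI P0 (CPar (Sum (Pref (dual \<alpha>) Nil))) P0'"
      by (rule ltsCI_scong[OF _ sc_trans[OF fill_Nil sc_sym[OF h(3)]]])
    then obtain Q' where q: "ltsCI Q0 (CPar (Sum (Pref (dual \<alpha>) Nil))) Q'" "Rel P0' Q'"
      using step[of _ P0'] by blast
    from ltsCI_elim[OF q(1)] obtain \<beta> B Q1 N T S where e: "\<beta> \<noteq> Tau"
      "CPar (Sum (Pref (dual \<alpha>) Nil)) = CPar (Sum (Pref (dual \<beta>) S))"
      "scong Q0 (resL B (Par (Sum (Plus (Pref \<beta> Q1) N)) T))" "set B \<inter> fn_pre \<beta> = {}"
      "scong (resL B (Par (Par Q1 T) S)) Q'" by (auto simp del: pre.simps)
    have "\<beta> = \<alpha>" "S = Nil" using e(2) dual_inj by auto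
    then obtain Q2 where q2: "ccs_trans Q0 \<alpha> Q2" "scong Q2 (resL B (Par Q1 T))"
      using form_trans[OF e(4) e(3)] by blast
    have e5: "scong (resL B (Par (Par Q1 T) Nil)) Q'" using e(5) \<open>S = Nil\<close> by simp
    have "scong Q' Q2" by (rule sc_trans[OF sc_sym[OF e5] sc_trans[OF fill_Nil sc_sym[OF q2(2)]]])
    then show ?thesis using q q2 by blast
  qed
qed




lemma ltsCI_pure: "ltsCI P C P' \<Longrightarrow> pure_proc P'"
proof -
  assume a: "ltsCI P C P'"
  then have p: "pure_proc P" unfolding ltsCI_def by blast
  from ltsCI_elim[OF a] show ?thesis
  proof (elim disjE exE conjE)
    fix Qe assume "red P Qe" "scong Qe P'"
    then show ?thesis using red_pure p pure_scong by blast
  next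
    fix \<alpha> A Q M R S
    assume h: "pure_proc S" "scong P (resL A (Par (Sum (Plus (Pref \<alpha> Q) M)) R))" "scong (resL A (Par (Par Q R) S)) P'"
    then show ?thesis using form_pure[OF p h(2)] pure_scong[OF h(3)] by simp
  qed
qed

lemma L_bisimilar_sym: "L_bisimilar L P Q \<Longrightarrow> L_bisimilar L Q P"
  unfolding L_bisimilar_def L_bisim_def by blast

lemma dir2: "L_bisimilar L_CCS P Q \<Longrightarrow> ccs_bisimilar P Q"
proof -
  assume pq: "L_bisimilar L_CCS P Q"
  define R2 where "R2 = (\<lambda>X Y. \<exists>P0 Q0. scong X P0 \<and> L_bisimilar L_CCS P0 Q0 \<and> scong Q0 Y)"
  have sym: "R2 Y X" if "R2 X Y" for X Y
    using that L_bisimilar_sym sc_sym unfolding R2_def by blast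
  have step: "\<exists>Y'. ccs_trans Y \<alpha> Y' \<and> R2 X' Y'" if r: "R2 X Y" and t: "ccs_trans X \<alpha> X'" for X Y \<alpha> X'
  proof -
    obtain P0 Q0 where h: "scong X P0" "L_bisimilar L_CCS P0 Q0" "scong Q0 Y" using r unfolding R2_def by blast
    obtain P0' where p0: "ccs_trans P0 \<alpha> P0'" "scong X' P0'" using scong_trans_match[OF h(1) t] by blast
    obtain Rel where rel: "L_bisim L_CCS Rel" "Rel P0 Q0" using h(2) unfolding L_bisimilar_def by blast
    obtain Q0' Q0'' where k: "ccs_trans Q0 \<alpha> Q0''" "Rel P0' Q0'" "scong Q0' Q0''" using K[OF rel p0(1)] by blast
    obtain Y' where y: "ccs_trans Y \<alpha> Y'" "scong Q0'' Y'" using scong_trans_match[OF h(3) k(1)] by blast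
    have "L_bisimilar L_CCS P0' Q0'" using rel(1) k(2) unfolding L_bisimilar_def by blast
    then have "R2 X' Y'" unfolding R2_def using p0(2) sc_trans[OF k(3) y(2)] by blast
    then show ?thesis using y by blast
  qed
  have "ccs_bisim R2"
    unfolding ccs_bisim_def
  proof (intro conjI allI impI)
    fix P Q \<alpha> P' assume "R2 P Q \<and> ccs_trans P \<alpha> P'"
    then show "\<exists>Q'. ccs_trans Q \<alpha> Q' \<and> R2 P' Q'" using step by blast
  next
    fix P Q \<alpha> Q' assume "R2 P Q \<and> ccs_trans Q \<alpha> Q'"
    then obtain P' where "ccs_trans P \<alpha> P'" "R2 Q' P'" using step sym by blast
    then show "\<exists>P'. ccs_trans P \<alpha> P' \<and> R2 P' Q'" using sym by blast
  qed
  moreover have "R2 P Q" unfolding R2_def using pq sc_refl by blast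
  ultimately show ?thesis unfolding ccs_bisimilar_def by blast
qed

lemma M1:
  assumes pP: "pure_proc P" and pQ: "pure_proc Q" and b: "ccs_bisimilar P Q" and t: "ltsCI P C P'"
  shows "\<exists>Q'. ltsCI Q C Q' \<and> ccs_bisimilar P' Q'"
proof -
  from ltsCI_elim[OF t] show ?thesis
  proof (elim disjE exE conjE)
    fix Qe assume C: "C = CHole" and r: "red P Qe" and s: "scong Qe P'"
    obtain P2 where p2: "ccs_trans P Tau P2" "scong P2 Qe" using red_tau_trans[OF r] by blast
    obtain Q2 where q2: "ccs_trans Q Tau Q2" "ccs_bisimilar P2 Q2" using bis_step[OF b p2(1)] by blast
    have "red Q Q2" using tau_red[OF q2(1)] by simp
    then have "ltsCI Q CHole Q2" using ltsCI_tau[OF pQ] by blast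
    moreover have "ccs_bisimilar P' Q2"
      using bis_trans[OF bis_scong[OF sc_sym[OF sc_trans[OF p2(2) s]]] q2(2)] .
    ultimately show ?thesis using C by blast
  next
    fix \<alpha> A P1 M R S
    assume a: "\<alpha> \<noteq> Tau" and C: "C = CPar (Sum (Pref (dual \<alpha>) S))" and pS: "pure_proc S"
      and hP: "scong P (resL A (Par (Sum (Plus (Pref \<alpha> P1) M)) R))" and fA: "set A \<inter> fn_pre \<alpha> = {}"
      and cf: "(set A \<union> bn_proc P1 \<union> bn_proc R) \<inter> fn_proc S = {}"
      and sP: "scong (resL A (Par (Par P1 R) S)) P'"
    obtain P2 where p2: "ccs_trans P \<alpha> P2" "scong P2 (resL A (Par P1 R))" using form_trans[OF fA hP] by blast
    obtain Q2 where q2: "ccs_trans Q \<alpha> Q2" "ccs_bisimilar P2 Q2" using bis_step[OF b p2(1)] by blast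
    obtain B Q1 N T where hQ: "scong Q (resL B (Par (Sum (Plus (Pref \<alpha> Q1) N)) T))"
       "set B \<inter> (fn_proc S \<union> fn_pre \<alpha>) = {}" "scong Q2 (resL B (Par Q1 T))"
      using vis_inv[OF q2(1) a fn_finite(1)[of S]] by blast
    obtain Q1' where r1: "scong Q1 Q1'" "bn_proc Q1' \<inter> fn_proc S = {}" using rename(1)[OF fn_finite(1)[of S]] by blast
    obtain T' where r2: "scong T T'" "bn_proc T' \<inter> fn_proc S = {}" using rename(1)[OF fn_finite(1)[of S]] by blast
    have hQ': "scong Q (resL B (Par (Sum (Plus (Pref \<alpha> Q1') N)) T'))"
      by (rule sc_trans[OF hQ(1) scong_resL[OF sc_par[OF sc_sum[OF ss_plus[OF ss_pref[OF r1(1)] ss_refl]] r2(1)]]])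
    have fB: "set B \<inter> fn_pre \<alpha> = {}" using hQ(2) by blast
    have cfQ: "(set B \<union> bn_proc Q1' \<union> bn_proc T') \<inter> fn_proc S = {}" using hQ(2) r1(2) r2(2) by blast
    have lq: "ltsCI Q C (resL B (Par (Par Q1' T') S))"
      unfolding C by (rule ltsCI_vis[OF pQ a hQ' fB pS cfQ])
    have fAS: "set A \<inter> fn_proc S = {}" using cf by blast
    have fBS: "set B \<inter> fn_proc S = {}" using hQ(2) by blast
    have s1: "scong P' (Par P2 S)"
    proof -
      have "scong P' (resL A (Par (Par P1 R) S))" by (rule sc_sym[OF sP])
      also have "scong \<dots> (Par (resL A (Par P1 R)) S)" by (rule sc_sym[OF extr_left[OF fAS]])
      also have "scong \<dots> (Par P2 S)" by (rule sc_par[OF sc_sym[OF p2(2)] sc_refl])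
      finally show ?thesis .
    qed
    have s2: "scong (Par Q2 S) (resL B (Par (Par Q1' T') S))"
    proof -
      have "scong (Par Q2 S) (Par (resL B (Par Q1 T)) S)" by (rule sc_par[OF hQ(3) sc_refl])
      also have "scong \<dots> (Par (resL B (Par Q1' T')) S)" by (rule sc_par[OF scong_resL[OF sc_par[OF r1(1) r2(1)]] sc_refl])
      also have "scong \<dots> (resL B (Par (Par Q1' T') S))" by (rule extr_left[OF fBS])
      finally show ?thesis .
    qed
    have "ccs_bisimilar P' (resL B (Par (Par Q1' T') S))"
      using bis_trans[OF bis_scong[OF s1] bis_trans[OF bis_par[OF q2(2)] bis_scong[OF s2]]] .
    then show ?thesis using lq by blast
  qed
qed

lemma dir1: "pure_proc P \<Longrightarrow> pure_proc Q \<Longrightarrow> ccs_bisimilar P Q \<Longrightarrow> L_bisimilar L_CCS P Q"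
proof -
  assume pP: "pure_proc P" and pQ: "pure_proc Q" and b: "ccs_bisimilar P Q"
  define R1 where "R1 = (\<lambda>X Y. pure_proc X \<and> pure_proc Y \<and> ccs_bisimilar X Y)"
  have "L_bisim L_CCS R1"
    unfolding L_bisim_def
  proof (rule conjI; intro allI impI)
    fix X Y assume "R1 X Y"
    then show "pure_proc X \<and> pure_proc Y \<and> R1 Y X" unfolding R1_def using bis_sym by blast
  next
    fix X Y C X' assume h: "R1 X Y \<and> ltsCI X C X'"
    have C: "C \<in> L_CCS" using h unfolding L_CCS_def by blast
    obtain Y' where y: "ltsCI Y C Y'" "ccs_bisimilar X' Y'" using M1 h unfolding R1_def by blast
    have "R1 X' Y'" unfolding R1_def using y ltsCI_pure h by blast
    then show "if C \<in> L_CCS then \<exists>Q'. ltsCI Y C Q' \<and> R1 X' Q' else \<exists>Q'. red (fill C Y) Q' \<and> R1 X' Q'"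
      using C y by auto
  qed
  moreover have "R1 P Q" unfolding R1_def using pP pQ b by blast
  ultimately show ?thesis unfolding L_bisimilar_def by blast
qed

theorem mainTheorem8:
  assumes "pure_proc P" and "pure_proc Q"
  shows "L_bisimilar L_CCS P Q \<longleftrightarrow> ccs_bisimilar P Q"
  using dir1 dir2 assms by blast



end
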